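(* For $0\le v\le 1$ and $a,b>0$, $$G(a,b)\le L\left(G_v(a,b),G_{1-v}(a,b)\right)\le L(a,b)$$ and $$G(a,b)\le G\left(L_v(a,b),L_{1-v}(a,b)\right)\le L(a,b).$$
   Context: For $x,y>0$: $G(x,y):=\sqrt{xy}$, $G_v(x,y):=x^{1-v}y^v$, and the logarithmic mean $L(x,y):=\frac{x-y}{\log x-\log y}$ for $x\neq y$, $L(x,x):=x$. For $0<v<1$ and $a\ne b$ the weighted logarithmic mean is $$L_v(a,b):=\frac{1}{\log a-\log b}\left(\frac{1-v}{v}(a-a^{1-v}b^v)+\frac{v}{1-v}(a^{1-v}b^v-b)\right),$$ with $L_v(a,a):=a$, and for the endpoint values (by continuity in $v$) $L_0(a,b):=a$, $L_1(a,b):=b$. *)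

theory Defs
  imports Complex_Main
begin

definition geo_mean :: "real \<Rightarrow> real \<Rightarrow> real" where
  "geo_mean x y = sqrt (x * y)"

definition wgeo_mean :: "real \<Rightarrow> real \<Rightarrow> real \<Rightarrow> real" where
  "wgeo_mean v x y = x powr (1 - v) * y powr v"

definition log_mean :: "real \<Rightarrow> real \<Rightarrow> real" where
  "log_mean x y = (if x = y then x else (x - y) / (ln x - ln y))"

definition wlog_mean :: "real \<Rightarrow> real \<Rightarrow> real \<Rightarrow> real" where
  "wlog_mean v a b =
    (if a = b then a
     else if v = 0 then a
     else if v = 1 then b
     else (1 / (ln a - ln b)) *
          ((1 - v) / v * (a - a powr (1 - v) * b powr v)
           + v / (1 - v) * (a powr (1 - v) * b powr v - b)))"

end

theory Submission imports Defs begin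

definition Phi :: "real \<Rightarrow> real" where
  "Phi x = (if x = 0 then 1 else (exp x - exp (-x)) / (2*x))"

lemma aux_g: fixes x :: real assumes "0 \<le> x" shows "x*(exp x + exp(-x)) - (exp x - exp(-x)) \<ge> 0"
proof -
  let ?f = "\<lambda>x::real. x*(exp x + exp(-x)) - (exp x - exp(-x))"
  have "?f 0 \<le> ?f x"
  proof (rule DERIV_nonneg_imp_nondecreasing[OF assms])
    fix z :: real assume z: "0 \<le> z" "z \<le> x"
    have "DERIV ?f z :> z*(exp z - exp(-z))"
      by (rule derivative_eq_intros refl | simp add: algebra_simps)+
    moreover have "z*(exp z - exp(-z)) \<ge> 0" using z by simp
    ultimately show "\<exists>y. DERIV ?f z :> y \<and> y \<ge> 0" by blast
  qed
  then show ?thesis by simp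
qed

lemma aux_ge: fixes x :: real assumes "0 \<le> x" shows "exp x - exp(-x) \<ge> 2*x"
proof -
  let ?f = "\<lambda>x::real. exp x - exp(-x) - 2*x"
  have "?f 0 \<le> ?f x"
  proof (rule DERIV_nonneg_imp_nondecreasing[OF assms])
    fix z :: real assume z: "0 \<le> z" "z \<le> x"
    have "DERIV ?f z :> exp z + exp(-z) - 2"
      by (rule derivative_eq_intros refl | simp)+
    moreover have "exp z + exp(-z) - 2 \<ge> 0" using exp_ge_add_one_self[of z] exp_ge_add_one_self[of "-z"] by linarith
    ultimately show "\<exists>y. DERIV ?f z :> y \<and> y \<ge> 0" by blast
  qed
  then show ?thesis by simp
qed

lemma aux_mono: fixes x y :: real assumes "0 < x" "x \<le> y" shows "(exp x - exp(-x))/x \<le> (exp y - exp(-y))/y"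
proof -
  let ?f = "\<lambda>x::real. (exp x - exp(-x))/x"
  show ?thesis
  proof (rule DERIV_nonneg_imp_nondecreasing[OF assms(2)])
    fix z :: real assume z: "x \<le> z" "z \<le> y"
    then have zp: "z > 0" using assms by simp
    have "DERIV ?f z :> (z*(exp z + exp(-z)) - (exp z - exp(-z)))/z^2"
      using zp by (auto intro!: derivative_eq_intros simp: field_simps power2_eq_square)
    moreover have "(z*(exp z + exp(-z)) - (exp z - exp(-z)))/z^2 \<ge> 0" using aux_g[of z] zp by simp
    ultimately show "\<exists>y. DERIV ?f z :> y \<and> y \<ge> 0" by blast
  qed
qed

lemma Phi_even: "Phi (-x) = Phi x"
  unfolding Phi_def by (auto simp: field_simps)

lemma Phi_ge1: "Phi x \<ge> 1"
proof -
  have "Phi \<bar>x\<bar> \<ge> 1"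
    using aux_ge[of "\<bar>x\<bar>"] unfolding Phi_def by (auto simp: field_simps)
  then show ?thesis by (cases "x \<ge> 0") (auto simp: Phi_even)
qed

lemma Phi_mono: assumes "\<bar>x\<bar> \<le> \<bar>y\<bar>" shows "Phi x \<le> Phi y"
proof -
  have "Phi \<bar>x\<bar> \<le> Phi \<bar>y\<bar>"
  proof (cases "x = 0")
    case True then show ?thesis using Phi_ge1[of "\<bar>y\<bar>"] by (simp add: Phi_def)
  next
    case False
    then have "0 < \<bar>x\<bar>" by simp
    from aux_mono[OF this assms] this assms show ?thesis unfolding Phi_def
      by (auto simp: divide_simps)
  qed
  moreover have "Phi \<bar>x\<bar> = Phi x" "Phi \<bar>y\<bar> = Phi y" by (auto simp: abs_if Phi_even)
  ultimately show ?thesis by simp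
qed

lemma Phi_eq: "exp x - exp(-x) = 2*x*Phi x"
  unfolding Phi_def by auto

lemma geo_exp: "geo_mean (exp(c+t)) (exp(c-t)) = exp c"
proof -
  have "exp(c+t) * exp(c-t) = exp c * exp c" by (simp add: mult_exp_exp)
  then show ?thesis unfolding geo_mean_def by simp
qed

lemma lm_exp: "log_mean (exp(c+s)) (exp(c-s)) = exp c * Phi s"
proof (cases "s = 0")
  case True then show ?thesis by (simp add: log_mean_def Phi_def)
next
  case False
  then have ne: "exp(c+s) \<noteq> exp(c-s)" by simp
  have "exp(c+s) - exp(c-s) = exp c * (exp s - exp(-s))"
    by (simp add: exp_add exp_diff right_diff_distrib exp_minus divide_inverse)
  then show ?thesis using ne False unfolding log_mean_def Phi_def by (simp add: field_simps)
qed

lemma wg_exp1: "wgeo_mean v (exp(c+t)) (exp(c-t)) = exp(c + (1-2*v)*t)"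
  unfolding wgeo_mean_def exp_powr_real mult_exp_exp by (simp add: algebra_simps)

lemma wg_exp2: "wgeo_mean (1-v) (exp(c+t)) (exp(c-t)) = exp(c - (1-2*v)*t)"
  unfolding wgeo_mean_def exp_powr_real mult_exp_exp by (simp add: algebra_simps)

lemma part1:
  assumes "0 \<le> v" "v \<le> 1"
  shows "geo_mean (exp(c+t)) (exp(c-t)) \<le> log_mean (wgeo_mean v (exp(c+t)) (exp(c-t))) (wgeo_mean (1 - v) (exp(c+t)) (exp(c-t)))
     \<and> log_mean (wgeo_mean v (exp(c+t)) (exp(c-t))) (wgeo_mean (1 - v) (exp(c+t)) (exp(c-t))) \<le> log_mean (exp(c+t)) (exp(c-t))"
proof -
  have "\<bar>(1-2*v)*t\<bar> \<le> \<bar>t\<bar>"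
  proof -
    have "\<bar>1-2*v\<bar> \<le> 1" using assms by auto
    then have "\<bar>1-2*v\<bar> * \<bar>t\<bar> \<le> 1 * \<bar>t\<bar>" by (rule mult_right_mono) simp
    then show ?thesis by (simp add: abs_mult)
  qed
  then have "Phi ((1-2*v)*t) \<le> Phi t" by (rule Phi_mono)
  moreover have "log_mean (wgeo_mean v (exp(c+t)) (exp(c-t))) (wgeo_mean (1 - v) (exp(c+t)) (exp(c-t)))
     = exp c * Phi ((1-2*v)*t)"
    by (simp only: wg_exp2[of v c t] wg_exp1[of v c t] lm_exp)
  moreover have "log_mean (exp(c+t)) (exp(c-t)) = exp c * Phi t" by (rule lm_exp)
  ultimately show ?thesis using Phi_ge1[of "(1-2*v)*t"]
    by (simp add: geo_exp)
qed

lemma XY_ident: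
  fixes F G Fi Gi p q :: real
  assumes "F * Fi = 1" "G * Gi = 1" "p * q = 1"
  shows "(p*(F*G - G*Fi) + q*(G*Fi - Fi*Gi)) * (q*(F*G - F*Gi) + p*(F*Gi - Fi*Gi))
       = (F*G - Fi*Gi)^2 + (p^2-1)*(F-Fi)^2 + (q^2-1)*(G-Gi)^2"
  using assms by algebra

lemma part2_gen:
  assumes v: "0 < v" "v < 1" and t: "t \<noteq> 0"
  shows "geo_mean (exp(c+t)) (exp(c-t)) \<le> geo_mean (wlog_mean v (exp(c+t)) (exp(c-t))) (wlog_mean (1 - v) (exp(c+t)) (exp(c-t)))
     \<and> geo_mean (wlog_mean v (exp(c+t)) (exp(c-t))) (wlog_mean (1 - v) (exp(c+t)) (exp(c-t))) \<le> log_mean (exp(c+t)) (exp(c-t))"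
proof -
  define K where "K = exp c"
  define F where "F = exp (v*t)"
  define Fi where "Fi = exp (-(v*t))"
  define G where "G = exp ((1-v)*t)"
  define Gi where "Gi = exp (-((1-v)*t))"
  define p where "p = (1-v)/v"
  define q where "q = v/(1-v)"
  have FFi: "F * Fi = 1" unfolding F_def Fi_def by (simp add: exp_minus)
  have GGi: "G * Gi = 1" unfolding G_def Gi_def by (simp add: exp_minus)
  have pq: "p * q = 1" unfolding p_def q_def using v by (simp add: field_simps)
  have e1: "exp(c+t) = K*(F*G)" unfolding K_def F_def G_def mult_exp_exp by (simp add: algebra_simps)
  have e2: "exp(c-t) = K*(Fi*Gi)" unfolding K_def Fi_def Gi_def mult_exp_exp by (simp add: algebra_simps)
  have e3: "exp(c+t) powr (1-v) * exp(c-t) powr v = K*(G*Fi)"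
    unfolding K_def Fi_def G_def exp_powr_real mult_exp_exp by (simp add: algebra_simps)
  have e4: "exp(c+t) powr (1-(1-v)) * exp(c-t) powr (1-v) = K*(F*Gi)"
    unfolding K_def F_def Gi_def exp_powr_real mult_exp_exp by (simp add: algebra_simps)
  have ne: "exp(c+t) \<noteq> exp(c-t)" using t by simp
  have lnd: "ln (exp(c+t)) - ln (exp(c-t)) = 2*t" by simp
  have W1: "wlog_mean v (exp(c+t)) (exp(c-t)) = K/(2*t) * (p*(F*G - G*Fi) + q*(G*Fi - Fi*Gi))"
    unfolding wlog_mean_def using ne v
    apply (simp only: if_False lnd e3 flip: e1 e2)
    apply (simp add: e1 e2 p_def q_def)
    apply (simp add: field_simps)
    done
  have W2: "wlog_mean (1-v) (exp(c+t)) (exp(c-t)) = K/(2*t) * (q*(F*G - F*Gi) + p*(F*Gi - Fi*Gi))"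
    unfolding wlog_mean_def using ne v
    apply (simp only: if_False lnd e4 flip: e1 e2)
    apply (simp add: e1 e2 p_def q_def)
    apply (simp add: field_simps)
    done
  define P1 where "P1 = Phi t"
  define Pv where "Pv = Phi (v*t)"
  define Pw where "Pw = Phi ((1-v)*t)"
  have d1: "F*G - Fi*Gi = 2*t*P1"
  proof -
    have "F*G = exp t" "Fi*Gi = exp (-t)" unfolding F_def G_def Fi_def Gi_def mult_exp_exp
      by (simp_all add: algebra_simps)
    then show ?thesis unfolding P1_def using Phi_eq[of t] by simp
  qed
  have d2: "F - Fi = 2*(v*t)*Pv" unfolding F_def Fi_def Pv_def by (rule Phi_eq)
  have d3: "G - Gi = 2*((1-v)*t)*Pw" unfolding G_def Gi_def Pw_def by (rule Phi_eq)
  have c1: "(p^2-1)*v^2 = 1-2*v" unfolding p_def using v by (simp add: field_simps power2_eq_square)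
  have c2: "(q^2-1)*(1-v)^2 = 2*v-1"
  proof -
    have nz: "1 - v \<noteq> 0" using v by simp
    have "(q^2-1)*(1-v)^2 = v^2 - (1-v)^2" unfolding q_def using nz
      by (simp add: power_divide left_diff_distrib)
    then show ?thesis by (simp add: power2_eq_square algebra_simps)
  qed
  define Q where "Q = P1^2 + (1-2*v)*Pv^2 - (1-2*v)*Pw^2"
  have prod: "wlog_mean v (exp(c+t)) (exp(c-t)) * wlog_mean (1-v) (exp(c+t)) (exp(c-t)) = K^2 * Q"
  proof -
    have "wlog_mean v (exp(c+t)) (exp(c-t)) * wlog_mean (1-v) (exp(c+t)) (exp(c-t))
       = K^2/(4*t^2) * ((F*G - Fi*Gi)^2 + (p^2-1)*(F-Fi)^2 + (q^2-1)*(G-Gi)^2)"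
      unfolding W1 W2 XY_ident[OF FFi GGi pq, symmetric] by (simp add: power2_eq_square)
    also have "\<dots> = K^2/(4*t^2) * ((2*t*P1)^2 + (p^2-1)*(2*(v*t)*Pv)^2 + (q^2-1)*(2*((1-v)*t)*Pw)^2)"
      by (simp only: d1 d2 d3)
    also have "\<dots> = K^2 * (P1^2 + ((p^2-1)*v^2)*Pv^2 + ((q^2-1)*(1-v)^2)*Pw^2)"
    proof -
      have gen: "K^2/(4*t^2) * ((2*t*A)^2 + al*(2*(v*t)*B)^2 + be*(2*(w*t)*C)^2)
          = K^2 * (A^2 + (al*v^2)*B^2 + (be*w^2)*C^2)" for A B C al be w :: real
        using t by (simp add: power_mult_distrib field_simps)
      show ?thesis by (rule gen)
    qed
    also have "\<dots> = K^2 * Q" unfolding c1 c2 Q_def by (simp add: algebra_simps)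
    finally show ?thesis .
  qed
  have P1g: "1 \<le> P1" "1 \<le> Pv" "1 \<le> Pw" unfolding P1_def Pv_def Pw_def by (rule Phi_ge1)+
  have "\<bar>v*t\<bar> \<le> \<bar>t\<bar>" "\<bar>(1-v)*t\<bar> \<le> \<bar>t\<bar>" using v
    by (simp_all add: abs_mult mult_left_le_one_le)
  then have "Pv \<le> P1" "Pw \<le> P1" unfolding P1_def Pv_def Pw_def by (simp_all add: Phi_mono)
  then have sq: "1 \<le> Pv^2" "1 \<le> Pw^2" "Pv^2 \<le> P1^2" "Pw^2 \<le> P1^2"
    using P1g by (simp_all add: power_mono one_le_power)
  have Qb: "1 \<le> Q \<and> Q \<le> P1^2"
  proof (cases "v \<le> 1/2")
    case True
    then have "\<bar>v*t\<bar> \<le> \<bar>(1-v)*t\<bar>" by (simp add: abs_mult mult_right_mono)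
    then have "Pv \<le> Pw" unfolding Pv_def Pw_def by (rule Phi_mono)
    then have dd: "0 \<le> Pw^2 - Pv^2" using P1g by (simp add: power_mono)
    have "(1-2*v)*(Pw^2 - Pv^2) \<le> 1*(Pw^2 - Pv^2)" using v dd by (intro mult_right_mono) auto
    moreover have "0 \<le> (1-2*v)*(Pw^2 - Pv^2)" using True dd by simp
    ultimately show ?thesis unfolding Q_def using sq by (simp add: algebra_simps)
  next
    case False
    then have "\<bar>(1-v)*t\<bar> \<le> \<bar>v*t\<bar>" by (simp add: abs_mult mult_right_mono)
    then have "Pw \<le> Pv" unfolding Pv_def Pw_def by (rule Phi_mono)
    then have dd: "0 \<le> Pv^2 - Pw^2" using P1g by (simp add: power_mono)
    have "(2*v-1)*(Pv^2 - Pw^2) \<le> 1*(Pv^2 - Pw^2)" using v dd by (intro mult_right_mono) auto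
    moreover have "0 \<le> (2*v-1)*(Pv^2 - Pw^2)" using False dd by simp
    ultimately show ?thesis unfolding Q_def using sq by (simp add: algebra_simps)
  qed
  have Kp: "K > 0" unfolding K_def by simp
  have gm: "geo_mean (wlog_mean v (exp(c+t)) (exp(c-t))) (wlog_mean (1 - v) (exp(c+t)) (exp(c-t))) = K * sqrt Q"
    unfolding geo_mean_def prod using Kp by (simp add: real_sqrt_mult)
  have "sqrt 1 \<le> sqrt Q" "sqrt Q \<le> sqrt (P1^2)" using Qb by (simp_all only: real_sqrt_le_iff)
  then have "1 \<le> sqrt Q" "sqrt Q \<le> P1" using P1g by simp_all
  then show ?thesis unfolding gm geo_exp lm_exp K_def[symmetric] P1_def[symmetric] using Kp by simp
qed

theorem theorem2p11:
  fixes a b v :: real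
  assumes "0 \<le> v" and "v \<le> 1" and "0 < a" and "0 < b"
  shows "geo_mean a b \<le> log_mean (wgeo_mean v a b) (wgeo_mean (1 - v) a b)
         \<and> log_mean (wgeo_mean v a b) (wgeo_mean (1 - v) a b) \<le> log_mean a b
         \<and> geo_mean a b \<le> geo_mean (wlog_mean v a b) (wlog_mean (1 - v) a b)
         \<and> geo_mean (wlog_mean v a b) (wlog_mean (1 - v) a b) \<le> log_mean a b"
proof -
  define c where "c = (ln a + ln b)/2"
  define t where "t = (ln a - ln b)/2"
  have "c + t = ln a" "c - t = ln b" unfolding c_def t_def by (simp_all add: field_simps)
  then have ea: "a = exp(c+t)" and eb: "b = exp(c-t)" using assms by simp_all
  have P1: "geo_mean a b \<le> log_mean (wgeo_mean v a b) (wgeo_mean (1 - v) a b)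
         \<and> log_mean (wgeo_mean v a b) (wgeo_mean (1 - v) a b) \<le> log_mean a b"
    unfolding ea eb by (rule part1[OF assms(1,2)])
  then have GL: "geo_mean a b \<le> log_mean a b" by linarith
  have P2: "geo_mean a b \<le> geo_mean (wlog_mean v a b) (wlog_mean (1 - v) a b)
         \<and> geo_mean (wlog_mean v a b) (wlog_mean (1 - v) a b) \<le> log_mean a b"
  proof (cases "a = b")
    case True
    then show ?thesis using assms by (simp add: wlog_mean_def geo_mean_def log_mean_def)
  next
    case False
    show ?thesis
    proof (cases "v = 0 \<or> v = 1")
      case True
      have "geo_mean (wlog_mean v a b) (wlog_mean (1 - v) a b) = geo_mean a b"
        using True False by (auto simp: wlog_mean_def geo_mean_def mult.commute)
      then show ?thesis using GL by simp
    next
      case vv: False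
      have t: "t \<noteq> 0" using False ea eb by auto
      show ?thesis unfolding ea eb
        by (rule part2_gen) (use assms vv t in auto)
    qed
  qed
  show ?thesis using P1 P2 by blast
qed

end
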